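(* Let $k$ be a commutative ring and $A$ a commutative $k$-algebra. The injective $A$-linear map $$\theta_{A/k}=\bigoplus_{n\ge0}\theta_n:\operatorname{gr}\operatorname{Diff}_{A/k}\to(\operatorname{Sym}\Omega_{A/k})^*_{gr}$$ is a homomorphism of graded $A$-algebras, where $(\operatorname{Sym}\Omega_{A/k})^*_{gr}$ carries the shuffle product.
   Context: $\operatorname{Diff}^{(0)}_{A/k}$ = multiplications by elements of $A$; $\operatorname{Diff}^{(i+1)}_{A/k}=\{\varphi\in\operatorname{End}_k(A):[\varphi,a]\in\operatorname{Diff}^{(i)}_{A/k}\ \forall a\in A\}$, $[\varphi,a]=\varphi\circ a-a\circ\varphi$; $\operatorname{Diff}_{A/k}=\bigcup_i\operatorname{Diff}^{(i)}_{A/k}$ is a filtered ring whose associated graded ring $\operatorname{gr}\operatorname{Diff}_{A/k}=\bigoplus_n\operatorname{Diff}^{(n)}/\operatorname{Diff}^{(n-1)}$ ($\operatorname{Diff}^{(-1)}=0$) is a commutative graded $A$-algebra; $\sigma_n(P)$ denotes the class of $P\in\operatorname{Diff}^{(n)}$. $\Omega_{A/k}$ is the module of Kähler differentials, $d:A\to\Omega_{A/k}$. $(\operatorname{Sym}\Omega)^*_{gr}=\bigoplus_n\operatorname{Hom}_A(\operatorname{Sym}^n\Omega,A)$ with shuffle product $(u\star v)(\prod_{l=1}^{i+j}\omega_l)=\sum_{L\subset[i+j],\sharp L=i}u(\omega_L)v(\omega_{[i+j]\setminus L})$, $\omega_L=\prod_{l\in L}\omega_l$. For $P\in\operatorname{Diff}^{(n)}$,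 $\theta_n(\sigma_n(P))$ is the $A$-linear form on $\operatorname{Sym}^n\Omega_{A/k}$ determined by $dx_1\cdots dx_n\mapsto\sum_{L\subset[n]}(-1)^{\sharp L}x_LP(x_{[n]\setminus L})$ ($x_L=\prod_{i\in L}x_i$); this is well defined, depends only on $\sigma_n(P)$, and $\theta_n$ is injective. *)

theory Defs
  imports Main
begin

text \<open>A commutative k-algebra A is modelled by two commutative ring types 'k, 'a
  together with the structure map iota : k -> A (a unital ring homomorphism);
  the k-module structure on A is c . a = iota c * a.\<close>

definition ring_hom_map :: "('k::comm_ring_1 \<Rightarrow> 'a::comm_ring_1) \<Rightarrow> bool" where
  "ring_hom_map \<iota> \<longleftrightarrow> \<iota> 1 = 1 \<and> (\<forall>c d. \<iota> (c + d) = \<iota> c + \<iota> d) \<and> (\<forall>c d. \<iota> (c * d) = \<iota> c * \<iota> d)"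

definition k_linear :: "('k::comm_ring_1 \<Rightarrow> 'a::comm_ring_1) \<Rightarrow> ('a \<Rightarrow> 'a) \<Rightarrow> bool" where
  "k_linear \<iota> \<phi> \<longleftrightarrow> (\<forall>x y. \<phi> (x + y) = \<phi> x + \<phi> y) \<and> (\<forall>c x. \<phi> (\<iota> c * x) = \<iota> c * \<phi> x)"

definition commutator :: "('a::comm_ring_1 \<Rightarrow> 'a) \<Rightarrow> 'a \<Rightarrow> ('a \<Rightarrow> 'a)" where
  "commutator \<phi> a = (\<lambda>x. \<phi> (a * x) - a * \<phi> x)"

fun Diff :: "('k::comm_ring_1 \<Rightarrow> 'a::comm_ring_1) \<Rightarrow> nat \<Rightarrow> ('a \<Rightarrow> 'a) set" where
  "Diff \<iota> 0 = {\<phi>. \<exists>c. \<phi> = (\<lambda>x. c * x)}"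
| "Diff \<iota> (Suc n) = {\<phi>. k_linear \<iota> \<phi> \<and> (\<forall>a. commutator \<phi> a \<in> Diff \<iota> n)}"

text \<open>An A-linear form on Sym^n Omega is determined by its values on the generators
  dx_{l_1} ... dx_{l_n}.  For a fixed family x : nat -> A and a finite index set L,
  theta_form P x L is the value of theta_{card L}(sigma_{card L}(P)) on
  omega_L = prod_{l in L} dx_l, i.e.
  sum_{M subset L} (-1)^card M * x_M * P(x_{L - M}).\<close>
definition theta_form :: "('a::comm_ring_1 \<Rightarrow> 'a) \<Rightarrow> (nat \<Rightarrow> 'a) \<Rightarrow> nat set \<Rightarrow> 'a" where
  "theta_form P x L = (\<Sum>M\<in>Pow L. (-1) ^ card M * (\<Prod>l\<in>M. x l) * P (\<Prod>l\<in>L - M. x l))"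

text \<open>Shuffle product of a degree-i form u and a form v, evaluated on
  omega_S = prod_{l in S} dx_l:  sum over L subset S with card L = i of u(omega_L) v(omega_{S-L}).
  Forms are given through their values on the monomials omega_L.\<close>
definition shuffle :: "nat \<Rightarrow> (nat set \<Rightarrow> 'a::comm_ring_1) \<Rightarrow> (nat set \<Rightarrow> 'a) \<Rightarrow> nat set \<Rightarrow> 'a" where
  "shuffle i u v S = (\<Sum>L\<in>{L. L \<subseteq> S \<and> card L = i}. u L * v (S - L))"

end

theory Submission
  imports Defs
begin

definition itc :: "('a::comm_ring_1 \<Rightarrow> 'a) \<Rightarrow> (nat \<Rightarrow> 'a) \<Rightarrow> nat set \<Rightarrow> 'a \<Rightarrow> 'a" where
  "itc P x T y = (\<Sum>M\<in>Pow T. (-1) ^ card M * (\<Prod>l\<in>M. x l) * P ((\<Prod>l\<in>T - M. x l) * y))"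

lemma theta_itc: "theta_form P x L = itc P x L 1"
  by (simp add: theta_form_def itc_def)

lemma itc_empty: "itc P x {} = P"
  by (rule ext) (simp add: itc_def)

lemma itc_rec1:
  assumes "finite T" "a \<notin> T"
  shows "itc P x (insert a T) y = itc P x T (x a * y) - x a * itc P x T y"
proof -
  have d: "Pow T \<inter> insert a ` Pow T = {}" using assms by auto
  have inj: "inj_on (insert a) (Pow T)" using assms unfolding inj_on_def by (metis PowD insert_ident subset_iff)
  have s1: "\<And>M. M \<in> Pow T \<Longrightarrow> insert a T - M = insert a (T - M)" using assms by auto
  have s2: "\<And>M. M \<in> Pow T \<Longrightarrow> insert a T - insert a M = T - M" using assms by auto
  have fin: "\<And>M. M \<in> Pow T \<Longrightarrow> finite M" using assms finite_subset by auto
  have nin: "\<And>M. M \<in> Pow T \<Longrightarrow> a \<notin> M" using assms by auto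
  have "itc P x (insert a T) y =
      (\<Sum>M\<in>Pow T. (-1) ^ card M * (\<Prod>l\<in>M. x l) * P ((\<Prod>l\<in>insert a T - M. x l) * y))
    + (\<Sum>M\<in>insert a ` Pow T. (-1) ^ card M * (\<Prod>l\<in>M. x l) * P ((\<Prod>l\<in>insert a T - M. x l) * y))"
    unfolding itc_def Pow_insert using assms d by (simp add: sum.union_disjoint)
  also have "(\<Sum>M\<in>insert a ` Pow T. (-1) ^ card M * (\<Prod>l\<in>M. x l) * P ((\<Prod>l\<in>insert a T - M. x l) * y))
      = (\<Sum>M\<in>Pow T. (-1) ^ card (insert a M) * (\<Prod>l\<in>insert a M. x l) * P ((\<Prod>l\<in>insert a T - insert a M. x l) * y))"
    by (simp add: sum.reindex[OF inj])
  also have "\<dots> = (\<Sum>M\<in>Pow T. - (x a * ((-1) ^ card M * (\<Prod>l\<in>M. x l) * P ((\<Prod>l\<in>T - M. x l) * y))))"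
    by (rule sum.cong) (auto simp: s2 fin nin)
  also have "(\<Sum>M\<in>Pow T. (-1) ^ card M * (\<Prod>l\<in>M. x l) * P ((\<Prod>l\<in>insert a T - M. x l) * y))
      = (\<Sum>M\<in>Pow T. (-1) ^ card M * (\<Prod>l\<in>M. x l) * P ((\<Prod>l\<in>T - M. x l) * (x a * y)))"
  proof (rule sum.cong)
    fix M assume M: "M \<in> Pow T"
    have "finite (T - M)" using assms by auto
    moreover have "a \<notin> T - M" using assms by auto
    ultimately show "(-1) ^ card M * (\<Prod>l\<in>M. x l) * P ((\<Prod>l\<in>insert a T - M. x l) * y)
      = (-1) ^ card M * (\<Prod>l\<in>M. x l) * P ((\<Prod>l\<in>T - M. x l) * (x a * y))"
      by (simp add: s1[OF M] mult_ac)
  qed simp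
  finally show ?thesis
    by (simp add: itc_def sum_negf sum_distrib_left)
qed

lemma itc_rec2:
  assumes "finite T" "a \<notin> T"
  shows "itc P x (insert a T) = itc (commutator P (x a)) x T"
proof (rule ext)
  fix y
  show "itc P x (insert a T) y = itc (commutator P (x a)) x T y"
    unfolding itc_rec1[OF assms]
    by (simp add: itc_def commutator_def sum_distrib_left sum_subtractf[symmetric]
        algebra_simps)
qed

definition additive :: "('a::comm_ring_1 \<Rightarrow> 'a) \<Rightarrow> bool" where
  "additive f \<longleftrightarrow> (\<forall>u v. f (u + v) = f u + f v)"

lemma additive_diff: "additive f \<Longrightarrow> f (u - v) = f u - f v"
proof -
  assume "additive f"
  then have "f (u - v + v) = f (u - v) + f v" unfolding additive_def by blast
  then show ?thesis by (simp add: algebra_simps)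
qed

lemma additive_zero: "additive f \<Longrightarrow> f 0 = 0"
  using additive_diff[of f 0 0] by simp

lemma Diff_additive: "P \<in> Diff \<iota> n \<Longrightarrow> additive P"
  by (cases n) (auto simp: additive_def k_linear_def distrib_left)

lemma itc_additive: "additive P \<Longrightarrow> additive (itc P x T)"
  unfolding additive_def itc_def
  by (simp add: distrib_left sum.distrib algebra_simps)

lemma itc_Diff:
  assumes "finite T"
  shows "\<forall>P n. P \<in> Diff \<iota> n \<and> card T \<le> n \<longrightarrow> itc P x T \<in> Diff \<iota> (n - card T)"
  using assms
proof (induction T rule: finite_induct)
  case empty then show ?case by (simp add: itc_empty)
next
  case (insert a T)
  show ?case
  proof (intro allI impI)
    fix P n assume h: "P \<in> Diff \<iota> n \<and> card (insert a T) \<le> n"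
    then obtain m where m: "n = Suc m" using insert by (cases n) auto
    have c: "commutator P (x a) \<in> Diff \<iota> m" using h m by simp
    have "card T \<le> m" using h m insert by simp
    then have "itc (commutator P (x a)) x T \<in> Diff \<iota> (m - card T)" using insert.IH c by blast
    then show "itc P x (insert a T) \<in> Diff \<iota> (n - card (insert a T))"
      using insert m by (simp add: itc_rec2)
  qed
qed

lemma itc_vanish:
  assumes "finite T"
  shows "\<forall>P n. P \<in> Diff \<iota> n \<and> n < card T \<longrightarrow> itc P x T = (\<lambda>_. 0)"
  using assms
proof (induction T rule: finite_induct)
  case empty then show ?case by simp
next
  case (insert a T)
  show ?case
  proof (intro allI impI)
    fix P n assume h: "P \<in> Diff \<iota> n \<and> n < card (insert a T)"
    show "itc P x (insert a T) = (\<lambda>_. 0)"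
    proof (cases "n < card T")
      case True
      then have "itc P x T = (\<lambda>_. 0)" using insert.IH h by blast
      then show ?thesis by (simp add: itc_rec1[OF insert(1,2)] fun_eq_iff)
    next
      case False
      then have "card T = n" using h insert by simp
      then have "itc P x T \<in> Diff \<iota> 0" using itc_Diff[OF insert(1), of \<iota> x] h by fastforce
      then obtain c where "itc P x T = (\<lambda>z. c * z)" by auto
      then show ?thesis by (simp add: itc_rec1[OF insert(1,2)] algebra_simps fun_eq_iff)
    qed
  qed
qed

lemma itc_leibniz:
  assumes "finite S" "additive P"
  shows "\<forall>y. itc (P \<circ> Q) x S y = (\<Sum>T\<in>Pow S. itc P x T (itc Q x (S - T) y))"
  using assms(1)
proof (induction S rule: finite_induct)
  case empty then show ?case by (simp add: itc_empty)
next
  case (insert a S)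
  show ?case
  proof
    fix y
    have d: "Pow S \<inter> insert a ` Pow S = {}" using insert by auto
    have inj: "inj_on (insert a) (Pow S)" using insert unfolding inj_on_def by (metis PowD insert_ident subset_iff)
    have "(\<Sum>T\<in>Pow (insert a S). itc P x T (itc Q x (insert a S - T) y))
      = (\<Sum>T\<in>Pow S. itc P x T (itc Q x (insert a S - T) y))
      + (\<Sum>T\<in>Pow S. itc P x (insert a T) (itc Q x (insert a S - insert a T) y))"
      unfolding Pow_insert using insert d by (simp add: sum.union_disjoint sum.reindex[OF inj])
    also have "\<dots> = (\<Sum>T\<in>Pow S. itc P x T (itc Q x (S - T) (x a * y))
        - x a * itc P x T (itc Q x (S - T) y))"
      unfolding sum.distrib[symmetric]
    proof (rule sum.cong)
      fix T assume T: "T \<in> Pow S"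
      have fT: "finite T" using T insert finite_subset by auto
      have aT: "a \<notin> T" using T insert by auto
      have e1: "insert a S - T = insert a (S - T)" using aT by auto
      have e2: "insert a S - insert a T = S - T" using insert by auto
      have q: "itc Q x (insert a (S - T)) y = itc Q x (S - T) (x a * y) - x a * itc Q x (S - T) y"
        using insert by (intro itc_rec1) auto
      have ad: "additive (itc P x T)" using itc_additive[OF assms(2)] .
      show "itc P x T (itc Q x (insert a S - T) y) + itc P x (insert a T) (itc Q x (insert a S - insert a T) y)
        = itc P x T (itc Q x (S - T) (x a * y)) - x a * itc P x T (itc Q x (S - T) y)"
        unfolding e1 e2 q itc_rec1[OF fT aT] additive_diff[OF ad] by simp
    qed simp
    also have "\<dots> = itc (P \<circ> Q) x S (x a * y) - x a * itc (P \<circ> Q) x S y"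
      using insert.IH by (simp only: sum_subtractf sum_distrib_left)
    also have "\<dots> = itc (P \<circ> Q) x (insert a S) y"
      by (rule sym, rule itc_rec1[OF insert(1,2)])
    finally show "itc (P \<circ> Q) x (insert a S) y = (\<Sum>T\<in>Pow (insert a S). itc P x T (itc Q x (insert a S - T) y))"
      by simp
  qed
qed

theorem mainTheorem6:
  fixes \<iota> :: "'k::comm_ring_1 \<Rightarrow> 'a::comm_ring_1"
  assumes "ring_hom_map \<iota>"
  shows "(\<forall>x. theta_form (\<lambda>a::'a. a) x {} = 1)
    \<and> (\<forall>i j P Q x. P \<in> Diff \<iota> i \<longrightarrow> Q \<in> Diff \<iota> j \<longrightarrow>
         theta_form (P \<circ> Q) x {..<i + j}
           = shuffle i (theta_form P x) (theta_form Q x) {..<i + j})"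
proof (intro conjI allI impI)
  fix x :: "nat \<Rightarrow> 'a"
  show "theta_form (\<lambda>a::'a. a) x {} = 1" by (simp add: theta_form_def)
next
  fix i j P Q and x :: "nat \<Rightarrow> 'a"
  assume P: "P \<in> Diff \<iota> i" and Q: "Q \<in> Diff \<iota> j"
  define S where "S = {..<i + j}"
  have fS: "finite S" and cS: "card S = i + j" by (auto simp: S_def)
  have adP: "additive P" using Diff_additive[OF P] .
  have "theta_form (P \<circ> Q) x S = (\<Sum>T\<in>Pow S. itc P x T (itc Q x (S - T) 1))"
    using itc_leibniz[OF fS adP] by (simp add: theta_itc)
  also have "\<dots> = (\<Sum>T\<in>{L. L \<subseteq> S \<and> card L = i}. itc P x T (itc Q x (S - T) 1))"
  proof (rule sum.mono_neutral_right)
    show "finite (Pow S)" using fS by simp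
    show "{L. L \<subseteq> S \<and> card L = i} \<subseteq> Pow S" by auto
    show "\<forall>T\<in>Pow S - {L. L \<subseteq> S \<and> card L = i}. itc P x T (itc Q x (S - T) 1) = 0"
    proof
      fix T assume T: "T \<in> Pow S - {L. L \<subseteq> S \<and> card L = i}"
      have fT: "finite T" using T fS finite_subset by auto
      have TS: "T \<subseteq> S" using T by auto
      show "itc P x T (itc Q x (S - T) 1) = 0"
      proof (cases "i < card T")
        case True
        then show ?thesis using itc_vanish[OF fT, of \<iota> x] P by metis
      next
        case False
        then have "card T < i" using T by auto
        moreover have "card (S - T) = card S - card T" using TS fT by (simp add: card_Diff_subset)
        ultimately have "j < card (S - T)" using cS by simp
        then have "itc Q x (S - T) = (\<lambda>_. 0)" using itc_vanish[of "S - T" \<iota> x] Q fS by blast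
        then show ?thesis using additive_zero[OF itc_additive[OF adP]] by simp
      qed
    qed
  qed
  also have "\<dots> = shuffle i (theta_form P x) (theta_form Q x) S"
    unfolding shuffle_def theta_itc
  proof (rule sum.cong)
    fix T assume T: "T \<in> {L. L \<subseteq> S \<and> card L = i}"
    have fT: "finite T" using T fS finite_subset by auto
    have "itc P x T \<in> Diff \<iota> 0" using itc_Diff[OF fT, of \<iota> x] P T by fastforce
    then obtain c where "itc P x T = (\<lambda>z. c * z)" by auto
    then show "itc P x T (itc Q x (S - T) 1) = itc P x T 1 * itc Q x (S - T) 1" by simp
  qed simp
  finally show "theta_form (P \<circ> Q) x {..<i + j} = shuffle i (theta_form P x) (theta_form Q x) {..<i + j}"
    by (simp add: S_def)
qed

end
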